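(* Let $x=(\xi,r)\in X^{(n)}$ and $y=(\eta,t)\in X^{(n)}\cap(B^{\mathbb{T}_n}_r(\xi)\times(0,r))$. If $m\ge1$ is such that the chemical distance between $x$ and $y$ in $G^\prime(X^{(n)})$ is larger than $m$, then there exists a toroidal descending chain of points of $X^{(n)}$ starting from $x$ and consisting of more than $m$ points.
   Context: Fix an integer $d\ge2$ and $n\ge1$. $\mathbb{T}_n$ is the torus obtained from $[-n/2,n/2]^d$ by identifying opposite faces, with toroidal distance ${\rm d}_{\mathbb{T}_n}$ and $B^{\mathbb{T}_n}_r(\xi)=\{\eta\in\mathbb{T}_n:{\rm d}_{\mathbb{T}_n}(\xi,\eta)\le r\}$. $X^{(n)}$ is a (realization of a) finite set of points $(\xi,r)\in\mathbb{T}_n\times[0,\infty)$ (in the paper, a Poisson point process of intensity $1$ on $\mathbb{T}_n$ with i.i.d. absolutely continuous marks). $G^\prime(X^{(n)})$ has vertex set $X^{(n)}$ and a directed edge from $(\xi,r)$ to $(\eta,t)$ iff $(\eta,t)\in B^{\mathbb{T}_n}_r(\xi)\times[0,r)$ and there is no $(\zeta,w)\in X^{(n)}\cap(B^{\mathbb{T}_n}_r(\xi)\times(t,r))$ with $\eta\in B^{\mathbb{T}_n}_w(\zeta)$; chemical distance is the minimal number of edges of a path, edges traversable in either direction. Points $x_1=(\xi_1,r_1),\dots,x_m=(\xi_m,r_m)$ form a toroidal descending chain if $r_1>r_2>\dots>r_m$ and $\xi_{i+1}\in B^{\mathbb{T}_n}_{r_i}(\xi_i)$ for all $i\in\{1,\dots,m-1\}$.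 *)

theory Defs
  imports "HOL-Analysis.Analysis" "HOL-Library.Extended_Nat"
begin

text \<open>The torus T_n: points are represented by their unique representative in the
  half-open box [-n/2, n/2)^d; the toroidal distance is the minimum over all integer
  translates.\<close>

definition torus_box :: "nat \<Rightarrow> (real ^ 'd) set" where
  "torus_box n = {\<xi>. \<forall>i. - real n / 2 \<le> \<xi> $ i \<and> \<xi> $ i < real n / 2}"

definition tdist :: "nat \<Rightarrow> real ^ 'd \<Rightarrow> real ^ 'd \<Rightarrow> real" where
  "tdist n \<xi> \<eta> = Inf {norm (\<xi> - \<eta> - real n *\<^sub>R k) | k :: real ^ 'd. \<forall>i. k $ i \<in> \<int>}"

definition tball :: "nat \<Rightarrow> real ^ 'd \<Rightarrow> real \<Rightarrow> (real ^ 'd) set" where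
  "tball n \<xi> r = {\<eta> \<in> torus_box n. tdist n \<xi> \<eta> \<le> r}"

type_synonym 'd mpoint = "(real ^ 'd) \<times> real"

definition gedge :: "nat \<Rightarrow> ('d::finite) mpoint set \<Rightarrow> 'd mpoint \<Rightarrow> 'd mpoint \<Rightarrow> bool" where
  "gedge n X x y \<longleftrightarrow> x \<in> X \<and> y \<in> X \<and>
     fst y \<in> tball n (fst x) (snd x) \<and> 0 \<le> snd y \<and> snd y < snd x \<and>
     \<not> (\<exists>z\<in>X. fst z \<in> tball n (fst x) (snd x) \<and> snd y < snd z \<and> snd z < snd x
              \<and> fst y \<in> tball n (fst z) (snd z))"

definition gadj :: "nat \<Rightarrow> ('d::finite) mpoint set \<Rightarrow> ('d mpoint \<times> 'd mpoint) set" where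
  "gadj n X = {(x, y). gedge n X x y \<or> gedge n X y x}"

definition chem_dist :: "nat \<Rightarrow> ('d::finite) mpoint set \<Rightarrow> 'd mpoint \<Rightarrow> 'd mpoint \<Rightarrow> enat" where
  "chem_dist n X x y =
     (if \<exists>k. (x, y) \<in> gadj n X ^^ k then enat (LEAST k. (x, y) \<in> gadj n X ^^ k) else \<infinity>)"

definition tdesc_chain :: "nat \<Rightarrow> ('d::finite) mpoint list \<Rightarrow> bool" where
  "tdesc_chain n xs \<longleftrightarrow>
     (\<forall>i. Suc i < length xs \<longrightarrow> snd (xs ! i) > snd (xs ! Suc i)
            \<and> fst (xs ! Suc i) \<in> tball n (fst (xs ! i)) (snd (xs ! i)))"

end

theory Submission
  imports Defs
begin

lemma tdc_single: "tdesc_chain n [x]"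
  by (simp add: tdesc_chain_def)

lemma tdc_cons2: "tdesc_chain n (x # y # rest) \<longleftrightarrow>
   (snd x > snd y \<and> fst y \<in> tball n (fst x) (snd x)) \<and> tdesc_chain n (y # rest)"
  unfolding tdesc_chain_def
  apply (rule iffI)
   apply (intro conjI allI impI)
  subgoal by (erule allE[of _ 0]) simp
  subgoal by (erule allE[of _ 0]) simp
  subgoal for i by (erule allE[of _ "Suc i"]) simp
  subgoal for i by (erule allE[of _ "Suc i"]) simp
  apply (intro allI impI)
  subgoal for i by (cases i) auto
  done

lemma tdc_append:
  assumes "tdesc_chain n xs" "xs \<noteq> []" "tdesc_chain n ys" "ys \<noteq> []" "last xs = hd ys"
  shows "tdesc_chain n (xs @ tl ys)"
  using assms
proof (induction xs rule: induct_list012)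
  case 1 then show ?case by simp
next
  case (2 x)
  then show ?case by (cases ys) auto
next
  case (3 x y zs)
  have "tdesc_chain n (y # zs)" using 3(3) tdc_cons2 by blast
  then have "tdesc_chain n ((y # zs) @ tl ys)" using 3 by simp
  then show ?case using 3(3) by (simp add: tdc_cons2)
qed

lemma main:
  assumes fin: "finite X" and nn: "\<forall>p\<in>X. snd p \<ge> 0"
  shows "u\<in>X \<Longrightarrow> v\<in>X \<Longrightarrow> fst v \<in> tball n (fst u) (snd u) \<Longrightarrow> snd v < snd u \<Longrightarrow>
    \<exists>xs. tdesc_chain n xs \<and> set xs \<subseteq> X \<and> xs \<noteq> [] \<and> hd xs = u \<and> last xs = v
      \<and> (u, v) \<in> gadj n X ^^ (length xs - 1)"
proof (induction "card {p\<in>X. snd v < snd p \<and> snd p \<le> snd u}" arbitrary: u v rule: less_induct)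
  case less
  show ?case
  proof (cases "gedge n X u v")
    case True
    then have "(u, v) \<in> gadj n X" by (simp add: gadj_def)
    then show ?thesis using less.prems
      by (intro exI[of _ "[u, v]"]) (auto simp: tdc_cons2 tdc_single)
  next
    case False
    then obtain z where z: "z \<in> X" "fst z \<in> tball n (fst u) (snd u)" "snd v < snd z"
      "snd z < snd u" "fst v \<in> tball n (fst z) (snd z)"
      using less.prems nn unfolding gedge_def by auto
    have s1: "{p\<in>X. snd z < snd p \<and> snd p \<le> snd u} \<subseteq> {p\<in>X. snd v < snd p \<and> snd p \<le> snd u}"
      using z(3) by force
    have s1': "z \<in> {p\<in>X. snd v < snd p \<and> snd p \<le> snd u} - {p\<in>X. snd z < snd p \<and> snd p \<le> snd u}"
      using z by simp
    have c1: "card {p\<in>X. snd z < snd p \<and> snd p \<le> snd u} < card {p\<in>X. snd v < snd p \<and> snd p \<le> snd u}"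
      using fin s1 s1' by (intro psubset_card_mono) auto
    have s2: "{p\<in>X. snd v < snd p \<and> snd p \<le> snd z} \<subseteq> {p\<in>X. snd v < snd p \<and> snd p \<le> snd u}"
      using z(4) by force
    have s2': "u \<in> {p\<in>X. snd v < snd p \<and> snd p \<le> snd u} - {p\<in>X. snd v < snd p \<and> snd p \<le> snd z}"
      using z less.prems by simp
    have c2: "card {p\<in>X. snd v < snd p \<and> snd p \<le> snd z} < card {p\<in>X. snd v < snd p \<and> snd p \<le> snd u}"
      using fin s2 s2' by (intro psubset_card_mono) auto
    obtain xs1 where x1: "tdesc_chain n xs1" "set xs1 \<subseteq> X" "xs1 \<noteq> []" "hd xs1 = u" "last xs1 = z"
      "(u, z) \<in> gadj n X ^^ (length xs1 - 1)"
      using less.hyps[OF c1 less.prems(1) z(1) z(2) z(4)] by blast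
    obtain xs2 where x2: "tdesc_chain n xs2" "set xs2 \<subseteq> X" "xs2 \<noteq> []" "hd xs2 = z" "last xs2 = v"
      "(z, v) \<in> gadj n X ^^ (length xs2 - 1)"
      using less.hyps[OF c2 z(1) less.prems(2) z(5) z(3)] by blast
    have "xs2 \<noteq> [z]"
    proof
      assume "xs2 = [z]"
      then have "v = z" using x2(5) by simp
      then show False using z(3) by simp
    qed
    then have tl2: "tl xs2 \<noteq> []" using x2(3,4) by (cases xs2) auto
    have len: "length (xs1 @ tl xs2) - 1 = (length xs1 - 1) + (length xs2 - 1)"
      using x1(3) x2(3) by (cases xs1; cases xs2) auto
    have "(u, v) \<in> gadj n X ^^ (length xs1 - 1) O gadj n X ^^ (length xs2 - 1)"
      using x1(6) x2(6) by blast
    then have p: "(u, v) \<in> gadj n X ^^ (length (xs1 @ tl xs2) - 1)"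
      by (simp only: len relpow_add)
    have "set (tl xs2) \<subseteq> X" using x2(2) by (cases xs2) auto
    moreover have "last (xs1 @ tl xs2) = v" using tl2 x2(5) x2(3)
      by (cases xs2) auto
    ultimately show ?thesis using tdc_append[OF x1(1) x1(3) x2(1) x2(3)] x1 x2(4) p
      by (intro exI[of _ "xs1 @ tl xs2"]) auto
  qed
qed

theorem lemma5p2:
  fixes X :: "('d::finite) mpoint set" and n m :: nat and \<xi> \<eta> :: "real ^ 'd" and r t :: real
  assumes "CARD('d) \<ge> 2" and "n \<ge> 1"
    and "finite X"
    and "\<forall>p\<in>X. fst p \<in> torus_box n \<and> snd p \<ge> 0"
    and "(\<xi>, r) \<in> X" and "(\<eta>, t) \<in> X"
    and "\<eta> \<in> tball n \<xi> r" and "0 < t" and "t < r"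
    and "m \<ge> 1"
    and "chem_dist n X (\<xi>, r) (\<eta>, t) > enat m"
  shows "\<exists>xs. tdesc_chain n xs \<and> set xs \<subseteq> X \<and> xs \<noteq> [] \<and> hd xs = (\<xi>, r)
              \<and> length xs > m"
proof -
  have nn: "\<forall>p\<in>X. snd p \<ge> 0" using assms(4) by blast
  obtain xs where xs: "tdesc_chain n xs" "set xs \<subseteq> X" "xs \<noteq> []" "hd xs = (\<xi>, r)"
    "((\<xi>, r), (\<eta>, t)) \<in> gadj n X ^^ (length xs - 1)"
    using main[OF assms(3) nn, of "(\<xi>, r)" "(\<eta>, t)"] assms(5,6,7,9) by auto
  have "chem_dist n X (\<xi>, r) (\<eta>, t) \<le> enat (length xs - 1)"
    proof -
    have "\<exists>k. ((\<xi>, r), (\<eta>, t)) \<in> gadj n X ^^ k" using xs(5) by blast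
    then have "chem_dist n X (\<xi>, r) (\<eta>, t) = enat (LEAST k. ((\<xi>, r), (\<eta>, t)) \<in> gadj n X ^^ k)"
      unfolding chem_dist_def by simp
    also have "\<dots> \<le> enat (length xs - 1)" using Least_le[of "\<lambda>k. ((\<xi>, r), (\<eta>, t)) \<in> gadj n X ^^ k", OF xs(5)] by simp
    finally show ?thesis .
  qed
  with assms(11) have "m < length xs - 1" by (metis enat_ord_simps(2) order_less_le_trans)
  then show ?thesis using xs(1-4) by (intro exI[of _ xs]) simp
qed

end
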